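(* Let $m \ge 1$ and let $D_1, \ldots, D_m, D_{m+1} > 0$ be feature dispersions (defined in the context) of a data set with $m+1$ features, where feature $m+1$ is an added (noisy) feature. For $v \in \{1, \ldots, m+1\}$ let $\alpha_v = \dfrac{1}{\sum_{j=1}^{m+1} \frac{D_v}{D_j}}$ be the FIR factors computed over all $m+1$ features. Then, with $D_1,\ldots,D_m$ fixed, \[ \lim_{D_{m+1} \to \infty} \sum_{v=1}^{m+1} \alpha_v^2 D_v = \frac{1}{\sum_{j=1}^m \frac{1}{D_j}}, \] which is the value of $WCSS_w = \sum_{v=1}^m \alpha_v^2 D_v$ obtained on the original $m$ features (with the FIR factors computed over those $m$ features). That is, $WCSS_w$ is asymptotically unaffected by adding an arbitrarily noisy feature.
   Context: Let $X = \{x_1, \ldots, x_n\}$ be a data set whose points are described by features, $x_{iv}$ denoting the value of feature $v$ for $x_i$. Let $C = \{C_1, \ldots, C_k\}$ be a partition of $X$ into clusters with centroids $z_l$ (component-wise means). The dispersion of feature $v$ is $D_v = \sum_{l=1}^k \sum_{x_i \in C_l} (x_{iv} - z_{lv})^2$, assumed positive for every feature. For a set of features $\{1,\ldots,p\}$, the FIR factors are $\alpha_v = 1/\sum_{j=1}^p (D_v/D_j)$ and the weighted objective is $WCSS_w = \sum_{v=1}^p \alpha_v^2 D_v$. *)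

theory Defs
  imports "HOL-Analysis.Analysis"
begin

definition fir_factor :: "nat set \<Rightarrow> (nat \<Rightarrow> real) \<Rightarrow> nat \<Rightarrow> real" where
  "fir_factor F D v = 1 / (\<Sum>j\<in>F. D v / D j)"

definition wcss_w :: "nat set \<Rightarrow> (nat \<Rightarrow> real) \<Rightarrow> real" where
  "wcss_w F D = (\<Sum>v\<in>F. (fir_factor F D v)^2 * D v)"

end

theory Submission
  imports Defs
begin

lemma wcss_closed:
  assumes fin: "finite F" and ne: "F \<noteq> {}" and pos: "\<And>j. j \<in> F \<Longrightarrow> D j > 0"
  shows "wcss_w F D = 1 / (\<Sum>j\<in>F. 1 / D j)"
proof -
  define S where "S = (\<Sum>j\<in>F. 1 / D j)"
  have Spos: "S > 0" unfolding S_def using fin ne pos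
    by (intro sum_pos) auto
  have a: "fir_factor F D v ^ 2 * D v = (1 / D v) / S^2" if "v \<in> F" for v
  proof -
    have "(\<Sum>j\<in>F. D v / D j) = D v * S"
      unfolding S_def by (simp add: sum_distrib_left divide_inverse)
    moreover have "D v > 0" using pos that by auto
    ultimately show ?thesis unfolding fir_factor_def using Spos
      by (simp add: field_simps power2_eq_square)
  qed
  have "wcss_w F D = (\<Sum>v\<in>F. (1 / D v) / S^2)"
    unfolding wcss_w_def by (rule sum.cong) (auto simp: a)
  also have "\<dots> = S / S^2" unfolding S_def by (simp add: sum_divide_distrib)
  also have "\<dots> = 1 / S" using Spos by (simp add: power2_eq_square)
  finally show ?thesis unfolding S_def .
qed

theorem mainTheorem3:
  fixes m :: nat and D :: "nat \<Rightarrow> real"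
  assumes "m \<ge> 1"
    and "\<And>j. j \<in> {1..m} \<Longrightarrow> D j > 0"
  shows "((\<lambda>t. wcss_w {1..m+1} (D(m+1 := t))) \<longlongrightarrow> 1 / (\<Sum>j=1..m. 1 / D j)) at_top
     \<and> wcss_w {1..m} D = 1 / (\<Sum>j=1..m. 1 / D j)"
proof
  define S where "S = (\<Sum>j=1..m. 1 / D j)"
  have Spos: "S > 0" unfolding S_def using assms
    by (intro sum_pos) auto
  show "wcss_w {1..m} D = 1 / (\<Sum>j=1..m. 1 / D j)"
    using assms by (intro wcss_closed) auto
  have ev: "\<forall>\<^sub>F t in at_top. wcss_w {1..m+1} (D(m+1 := t)) = 1 / (S + 1 / t)"
    using eventually_gt_at_top[of "0::real"]
  proof (rule eventually_mono)
    fix t :: real assume t: "t > 0"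
    have "wcss_w {1..m+1} (D(m+1 := t)) = 1 / (\<Sum>j\<in>{1..m+1}. 1 / (D(m+1 := t)) j)"
      using assms t by (intro wcss_closed) auto
    also have "(\<Sum>j\<in>{1..m+1}. 1 / (D(m+1 := t)) j) = (\<Sum>j=1..m. 1 / (D(m+1 := t)) j) + 1 / t"
      by simp
    also have "(\<Sum>j=1..m. 1 / (D(m+1 := t)) j) = S"
      unfolding S_def by (rule sum.cong) auto
    finally show "wcss_w {1..m+1} (D(m+1 := t)) = 1 / (S + 1 / t)" .
  qed
  have "((\<lambda>t::real. 1 / (S + 1 / t)) \<longlongrightarrow> 1 / (S + 0)) at_top"
    using Spos by (intro tendsto_intros tendsto_divide_0[OF tendsto_const] filterlim_ident filterlim_mono[OF filterlim_ident]) (auto simp: at_top_le_at_infinity)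
  then have "((\<lambda>t::real. 1 / (S + 1 / t)) \<longlongrightarrow> 1 / S) at_top" by simp
  then show "((\<lambda>t. wcss_w {1..m+1} (D(m+1 := t))) \<longlongrightarrow> 1 / (\<Sum>j=1..m. 1 / D j)) at_top"
    unfolding S_def[symmetric] using tendsto_cong[OF ev] by simp
qed

end
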